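(* For any positive integers $d,T,B$ with $d\le T$ and $d\le B$, there exists an oblivious adversary using a ground truth $\theta^*\in\mathbb{R}^d$ with $\|\theta^*\|_2\le\sqrt d$ and $|\langle\theta^*,x_t\rangle|\le 1$ for all $t$ (with $\|x_t\|_2\le 1$ and noise independent, zero-mean, sub-Gaussian with variance proxy $1/4$), such that every online active learning algorithm with label budget $B$ has expected regret at least $c\,dT/B$ for an absolute constant $c>0$.
   Context: Online active regression protocol: an oblivious adversary fixes $\theta^*\in\mathbb{R}^d$ and inputs $x_1,\dots,x_T$ in advance; labels are $y_t=\langle\theta^*,x_t\rangle+\xi_t$ with independent zero-mean noise. At each round the learner sees $x_t$, predicts $\hat y_t$ using only previously observed information, then decides whether to query $y_t$. Label budget $B$ means the number of queries is at most $B$. Regret: $R=\sum_{t=1}^T(\hat y_t-\langle\theta^*,x_t\rangle)^2$. *)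

theory Defs
  imports "HOL-Probability.Probability"
begin

text \<open>Vectors of R^d are represented as functions nat => real, only coordinates i < d matter.
  Input sequences are functions from the round index (0-based, rounds 0..T-1) to vectors.\<close>

type_synonym vec = "nat \<Rightarrow> real"
type_synonym inputs = "nat \<Rightarrow> vec"

definition ip :: "nat \<Rightarrow> vec \<Rightarrow> vec \<Rightarrow> real" where
  "ip d u v = (\<Sum>i<d. u i * v i)"

definition vnorm :: "nat \<Rightarrow> vec \<Rightarrow> real" where
  "vnorm d v = sqrt (\<Sum>i<d. (v i)^2)"

text \<open>A (possibly randomized) learner: a seed r (drawn once from the learner's seed
  distribution), a prediction rule and a query rule.  Both rules receive the round t, the
  inputs observed so far (rounds \<le> t, coordinates < d) and the labels observed so far
  (Some y for queried past rounds, None otherwise).\<close>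

type_synonym learner_pred = "real \<Rightarrow> nat \<Rightarrow> inputs \<Rightarrow> (nat \<Rightarrow> real option) \<Rightarrow> real"
type_synonym learner_query = "real \<Rightarrow> nat \<Rightarrow> inputs \<Rightarrow> (nat \<Rightarrow> real option) \<Rightarrow> bool"

definition seen_inputs :: "nat \<Rightarrow> inputs \<Rightarrow> nat \<Rightarrow> inputs" where
  "seen_inputs d xs t = (\<lambda>s i. if s \<le> t \<and> i < d then xs s i else 0)"

definition seen_labels :: "nat set \<Rightarrow> (nat \<Rightarrow> real) \<Rightarrow> nat \<Rightarrow> real option" where
  "seen_labels Q y = (\<lambda>s. if s \<in> Q then Some (y s) else None)"

fun queried :: "nat \<Rightarrow> learner_query \<Rightarrow> real \<Rightarrow> inputs \<Rightarrow> (nat \<Rightarrow> real) \<Rightarrow> nat \<Rightarrow> nat set" where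
  "queried d q r xs y 0 = {}"
| "queried d q r xs y (Suc t) =
     (if q r t (seen_inputs d xs t) (seen_labels (queried d q r xs y t) y)
      then insert t (queried d q r xs y t) else queried d q r xs y t)"

definition prediction ::
  "nat \<Rightarrow> learner_pred \<Rightarrow> learner_query \<Rightarrow> real \<Rightarrow> inputs \<Rightarrow> (nat \<Rightarrow> real) \<Rightarrow> nat \<Rightarrow> real" where
  "prediction d p q r xs y t = p r t (seen_inputs d xs t) (seen_labels (queried d q r xs y t) y)"

definition labels :: "nat \<Rightarrow> vec \<Rightarrow> inputs \<Rightarrow> (nat \<Rightarrow> real) \<Rightarrow> nat \<Rightarrow> real" where
  "labels d \<theta> xs \<xi> t = ip d \<theta> (xs t) + \<xi> t"

definition regret ::
  "nat \<Rightarrow> nat \<Rightarrow> learner_pred \<Rightarrow> learner_query \<Rightarrow> real \<Rightarrow> vec \<Rightarrow> inputs \<Rightarrow> (nat \<Rightarrow> real) \<Rightarrow> real" where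
  "regret d T p q r \<theta> xs \<xi> =
     (\<Sum>t<T. (prediction d p q r xs (labels d \<theta> xs \<xi>) t - ip d \<theta> (xs t))^2)"

definition respects_budget :: "nat \<Rightarrow> nat \<Rightarrow> nat \<Rightarrow> learner_query \<Rightarrow> bool" where
  "respects_budget d T B q = (\<forall>r xs y. card (queried d q r xs y T) \<le> B)"

text \<open>The learner's rules are measurable in its random seed (needed for the expectation).\<close>
definition seed_measurable :: "real measure \<Rightarrow> learner_pred \<Rightarrow> learner_query \<Rightarrow> bool" where
  "seed_measurable S p q =
     (\<forall>t X Y. (\<lambda>r. p r t X Y) \<in> borel_measurable S \<and> {r \<in> space S. q r t X Y} \<in> sets S)"

definition zero_mean_pmf :: "real pmf \<Rightarrow> bool" where
  "zero_mean_pmf N = (integrable (measure_pmf N) (\<lambda>x. x) \<and> measure_pmf.expectation N (\<lambda>x. x) = 0)"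

definition sub_gaussian_pmf :: "real pmf \<Rightarrow> real \<Rightarrow> bool" where
  "sub_gaussian_pmf N \<sigma>2 =
     (\<forall>l::real. integrable (measure_pmf N) (\<lambda>x. exp (l * x)) \<and>
        measure_pmf.expectation N (\<lambda>x. exp (l * x)) \<le> exp (l^2 * \<sigma>2 / 2))"

text \<open>A randomized oblivious adversary: a distribution P over instances (theta, x_0..x_{T-1});
  each instance comes with noise distributions N theta xs t for the rounds t < T.\<close>
definition valid_adversary ::
  "nat \<Rightarrow> nat \<Rightarrow> (vec \<times> inputs) pmf \<Rightarrow> (vec \<Rightarrow> inputs \<Rightarrow> nat \<Rightarrow> real pmf) \<Rightarrow> bool" where
  "valid_adversary d T P N =
     (\<forall>(\<theta>, xs) \<in> set_pmf P. vnorm d \<theta> \<le> sqrt (real d) \<and>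
        (\<forall>t<T. vnorm d (xs t) \<le> 1 \<and> \<bar>ip d \<theta> (xs t)\<bar> \<le> 1 \<and>
               zero_mean_pmf (N \<theta> xs t) \<and> sub_gaussian_pmf (N \<theta> xs t) (1/4)))"

definition outcome ::
  "nat \<Rightarrow> (vec \<times> inputs) pmf \<Rightarrow> (vec \<Rightarrow> inputs \<Rightarrow> nat \<Rightarrow> real pmf) \<Rightarrow> (vec \<times> inputs \<times> (nat \<Rightarrow> real)) pmf" where
  "outcome T P N =
     bind_pmf P (\<lambda>(\<theta>, xs). map_pmf (\<lambda>\<xi>. (\<theta>, xs, \<xi>)) (Pi_pmf {..<T} 0 (N \<theta> xs)))"

definition expected_regret ::
  "nat \<Rightarrow> nat \<Rightarrow> (vec \<times> inputs) pmf \<Rightarrow> (vec \<Rightarrow> inputs \<Rightarrow> nat \<Rightarrow> real pmf) \<Rightarrow> real measure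
   \<Rightarrow> learner_pred \<Rightarrow> learner_query \<Rightarrow> ennreal" where
  "expected_regret d T P N S p q =
     (\<integral>\<^sup>+ r. (\<integral>\<^sup>+ \<omega>. ennreal (regret d T p q r (fst \<omega>) (fst (snd \<omega>)) (snd (snd \<omega>)))
                  \<partial>measure_pmf (outcome T P N)) \<partial>S)"

end

theory Submission
  imports Defs
begin

definition lab1 :: "bool \<Rightarrow> real" where "lab1 x = (if x then 1/2 else -1/2)"

definition noiseD :: "real \<Rightarrow> real pmf" where
  "noiseD \<mu> = map_pmf (\<lambda>x. lab1 x - \<mu>) (bernoulli_pmf (1/2 + \<mu>))"

lemma noise_finite: "finite (set_pmf (noiseD \<mu>))"
  unfolding noiseD_def by simp

lemma noise_mean:
  assumes "\<bar>\<mu>\<bar> \<le> 1/2"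
  shows "zero_mean_pmf (noiseD \<mu>)"
proof -
  have "integrable (measure_pmf (noiseD \<mu>)) (\<lambda>x. x)"
    by (rule integrable_measure_pmf_finite[OF noise_finite])
  moreover have "measure_pmf.expectation (noiseD \<mu>) (\<lambda>x. x) = 0"
    using assms unfolding noiseD_def by (simp add: lab1_def algebra_simps)
  ultimately show ?thesis unfolding zero_mean_pmf_def by simp
qed

lemma noise_range: "x \<in> set_pmf (noiseD \<mu>) \<Longrightarrow> x \<in> {-1/2-\<mu>..1/2-\<mu>}"
  unfolding noiseD_def by (auto simp: lab1_def)

lemma noise_subg:
  assumes "\<bar>\<mu>\<bar> \<le> 1/2"
  shows "sub_gaussian_pmf (noiseD \<mu>) (1/4)"
  unfolding sub_gaussian_pmf_def
proof
  fix l :: real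
  let ?M = "measure_pmf (noiseD \<mu>)"
  have int: "integrable ?M (\<lambda>x. exp (l * x))"
    by (rule integrable_measure_pmf_finite[OF noise_finite])
  have E0: "measure_pmf.expectation (noiseD \<mu>) (\<lambda>x. x) = 0"
    using noise_mean[OF assms] unfolding zero_mean_pmf_def by simp
  have nn: "(\<integral>\<^sup>+x. exp (l * x) \<partial>?M) \<le> ennreal (exp (l^2 * (1/4) / 2))"
  proof (cases "l = 0")
    case True
    then show ?thesis by (simp add: measure_pmf.emeasure_space_1)
  next
    case False
    show ?thesis
    proof (cases "l > 0")
      case True
      interpret I: interval_bounded_random_variable ?M "\<lambda>x. x" "-1/2-\<mu>" "1/2-\<mu>"
        by unfold_locales (auto simp: AE_measure_pmf_iff dest: noise_range)
      have "(\<integral>\<^sup>+x. exp (l * x) \<partial>?M) \<le> ennreal (exp (l\<^sup>2 * ((1/2-\<mu>) - (-1/2-\<mu>))\<^sup>2 / 8))"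
        by (rule I.Hoeffdings_lemma_nn_integral_0[OF True E0])
      then show ?thesis by simp
    next
      case c2: False
      with False have lneg: "-l > 0" by simp
      interpret I: interval_bounded_random_variable ?M "\<lambda>x. - x" "-(1/2-\<mu>)" "1/2+\<mu>"
        by unfold_locales (auto simp: AE_measure_pmf_iff dest!: noise_range)
      have E1: "measure_pmf.expectation (noiseD \<mu>) (\<lambda>x. - x) = 0" using E0 by simp
      have "(\<integral>\<^sup>+x. exp ((-l) * (- x)) \<partial>?M) \<le> ennreal (exp ((-l)\<^sup>2 * ((1/2+\<mu>) - (-(1/2-\<mu>)))\<^sup>2 / 8))"
        by (rule I.Hoeffdings_lemma_nn_integral_0[OF lneg E1])
      then show ?thesis by simp
    qed
  qed
  have "(\<integral>\<^sup>+x. ennreal (exp (l * x)) \<partial>?M) = ennreal (measure_pmf.expectation (noiseD \<mu>) (\<lambda>x. exp (l * x)))"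
    by (rule nn_integral_eq_integral[OF int]) auto
  with nn have "measure_pmf.expectation (noiseD \<mu>) (\<lambda>x. exp (l * x)) \<le> exp (l^2 * (1/4) / 2)"
    by (simp add: ennreal_le_iff)
  with int show "integrable ?M (\<lambda>x. exp (l * x)) \<and>
      measure_pmf.expectation (noiseD \<mu>) (\<lambda>x. exp (l * x)) \<le> exp (l\<^sup>2 * (1 / 4) / 2)" by simp
qed

definition labb :: "(nat \<Rightarrow> bool) \<Rightarrow> nat \<Rightarrow> real" where "labb b = (\<lambda>u. lab1 (b u))"

definition BB :: "nat \<Rightarrow> (nat \<Rightarrow> bool) set" where "BB n = PiE_dflt {..<n} False (\<lambda>_. UNIV)"

lemma finite_BB: "finite (BB n)"
  unfolding BB_def by (rule finite_PiE_dflt) auto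

lemma BB_Suc_sum:
  fixes F :: "(nat \<Rightarrow> bool) \<Rightarrow> 'a::comm_monoid_add"
  shows "(\<Sum>b\<in>BB (Suc n). F b) = (\<Sum>b\<in>BB n. \<Sum>x\<in>UNIV. F (b(n:=x)))"
proof -
  have bij: "bij_betw (\<lambda>(b,x). b(n:=x)) (BB n \<times> UNIV) (BB (Suc n))"
  proof (rule bij_betwI')
    fix bx cy assume A: "bx \<in> BB n \<times> (UNIV::bool set)" "cy \<in> BB n \<times> (UNIV::bool set)"
    obtain b x where bx: "bx = (b, x)" by (cases bx)
    obtain c y where cy: "cy = (c, y)" by (cases cy)
    have bn: "b n = False" "c n = False" using A bx cy by (auto simp: BB_def PiE_dflt_def)
    have "(b(n:=x) = c(n:=y)) = (b = c \<and> x = y)"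
    proof
      assume e: "b(n:=x) = c(n:=y)"
      have "x = y" using fun_cong[OF e, of n] by simp
      moreover have "b = c"
      proof
        fix u show "b u = c u" using fun_cong[OF e, of u] bn by (cases "u = n") auto
      qed
      ultimately show "b = c \<and> x = y" by simp
    qed simp
    then show "((case bx of (b, x) \<Rightarrow> b(n := x)) = (case cy of (b, x) \<Rightarrow> b(n := x))) = (bx = cy)"
      by (simp add: bx cy)
  next
    fix bx assume "bx \<in> BB n \<times> (UNIV::bool set)"
    then show "(case bx of (b, x) \<Rightarrow> b(n := x)) \<in> BB (Suc n)"
      by (cases bx) (auto simp: BB_def PiE_dflt_def)
  next
    fix c assume c: "c \<in> BB (Suc n)"
    show "\<exists>bx\<in>BB n \<times> UNIV. c = (case bx of (b, x) \<Rightarrow> b(n := x))"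
      by (rule bexI[of _ "(c(n:=False), c n)"]) (use c in \<open>auto simp: BB_def PiE_dflt_def\<close>)
  qed
  have "(\<Sum>b\<in>BB (Suc n). F b) = (\<Sum>bx\<in>BB n \<times> UNIV. F (case bx of (b, x) \<Rightarrow> b(n := x)))"
    using sum.reindex_bij_betw[OF bij, of F] by simp
  also have "\<dots> = (\<Sum>b\<in>BB n. \<Sum>x\<in>UNIV. F (b(n:=x)))"
    by (simp add: sum.cartesian_product prod.case_distrib)
  finally show ?thesis .
qed

lemma prod_upd_lt: "(\<Prod>u<(n::nat). F u ((b(n:=x)) u)) = (\<Prod>u<n. F u (b u))"
proof (rule prod.cong)
  fix u assume "u \<in> {..<n}"
  then have "u \<noteq> n" by simp
  then show "F u ((b(n:=x)) u) = F u (b u)" by simp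
qed simp

lemma BB_0: "BB 0 = {\<lambda>_. False}"
  by (auto simp: BB_def PiE_dflt_def)

context
  fixes d :: nat and q :: learner_query and r :: real and xs :: inputs
begin

definition Qb :: "(nat \<Rightarrow> bool) \<Rightarrow> nat \<Rightarrow> nat set" where
  "Qb b n = queried d q r xs (labb b) n"

definition aq :: "nat \<Rightarrow> (nat \<Rightarrow> bool) \<Rightarrow> bool" where
  "aq u b = q r u (seen_inputs d xs u) (seen_labels (Qb b u) (labb b))"

lemma Qb_0[simp]: "Qb b 0 = {}"
  by (simp add: Qb_def)

lemma Qb_Suc: "Qb b (Suc n) = (if aq n b then insert n (Qb b n) else Qb b n)"
  by (simp add: Qb_def aq_def)

lemma Qb_sub: "Qb b n \<subseteq> {..<n}"
  by (induction n) (auto simp: Qb_Suc)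

lemma Qb_mono: "m \<le> n \<Longrightarrow> Qb b m \<subseteq> Qb b n"
proof (induction n)
  case 0 then show ?case by simp
next
  case (Suc n)
  then show ?case by (cases "m = Suc n") (auto simp: Qb_Suc)
qed

lemma Qb_mem: "u < n \<Longrightarrow> (u \<in> Qb b n) = aq u b"
proof (induction n)
  case 0 then show ?case by simp
next
  case (Suc n)
  then show ?case using Qb_sub[of b n] by (cases "u = n") (auto simp: Qb_Suc)
qed

lemma Qb_dep: "\<forall>u\<in>Qb b n. b u = b' u \<Longrightarrow> Qb b' n = Qb b n"
proof (induction n)
  case 0 then show ?case by simp
next
  case (Suc n)
  have agree: "\<forall>u\<in>Qb b n. b u = b' u" using Suc.prems Qb_mono[of n "Suc n" b] by auto
  have IH: "Qb b' n = Qb b n" using Suc.IH[OF agree] .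
  have "seen_labels (Qb b' n) (labb b') = seen_labels (Qb b n) (labb b)"
    using IH agree by (auto simp: seen_labels_def labb_def fun_eq_iff)
  then have "aq n b' = aq n b" by (simp add: aq_def)
  then show ?case by (simp add: Qb_Suc IH)
qed

lemma aq_dep: "\<forall>u\<in>Qb b n. b u = b' u \<Longrightarrow> aq n b' = aq n b"
proof -
  assume a: "\<forall>u\<in>Qb b n. b u = b' u"
  have "seen_labels (Qb b' n) (labb b') = seen_labels (Qb b n) (labb b)"
    using Qb_dep[OF a] a by (auto simp: seen_labels_def labb_def fun_eq_iff)
  then show ?thesis by (simp add: aq_def)
qed

lemma Qb_prefix: "\<forall>u<n. b u = b' u \<Longrightarrow> Qb b' n = Qb b n"
  using Qb_dep Qb_sub by blast

lemma aq_prefix: "\<forall>v<u. b v = b' v \<Longrightarrow> aq u b' = aq u b"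
  using aq_dep Qb_sub by blast

definition revd :: "nat \<Rightarrow> ((nat \<Rightarrow> bool) \<Rightarrow> 'a) \<Rightarrow> bool" where
  "revd n g = (\<forall>b b'. (\<forall>u\<in>Qb b n. b u = b' u) \<longrightarrow> g b' = g b)"

lemma revsum:
  fixes pw pw' :: "nat \<Rightarrow> bool \<Rightarrow> real"
  assumes pw: "\<And>u. pw u True + pw u False = 1" and pw': "\<And>u. pw' u True + pw' u False = 1"
    and "revd n g"
  shows "(\<Sum>b\<in>BB n. (\<Prod>u<n. pw u (b u)) * g b) =
         (\<Sum>b\<in>BB n. (\<Prod>u<n. if aq u b then pw u (b u) else pw' u (b u)) * g b)"
  using assms(3)
proof (induction n arbitrary: g)
  case 0
  then show ?case by (simp add: BB_0)
next
  case (Suc n)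
  define G where "G b = (\<Sum>x\<in>UNIV. pw n x * g (b(n:=x)))" for b
  have revG: "revd n G"
    unfolding revd_def
  proof (intro allI impI)
    fix b b' assume ag: "\<forall>u\<in>Qb b n. b u = b' u"
    have "g (b'(n:=x)) = g (b(n:=x))" for x
    proof -
      have pre: "Qb (b(n:=x)) n = Qb b n" by (rule Qb_prefix) simp
      have "\<forall>u\<in>Qb (b(n:=x)) (Suc n). (b(n:=x)) u = (b'(n:=x)) u"
        using ag pre by (auto simp: Qb_Suc split: if_splits)
      then show ?thesis using Suc.prems unfolding revd_def by blast
    qed
    then show "G b' = G b" by (simp add: G_def)
  qed
  have aqupd: "aq u (b(n:=x)) = aq u b" if "u \<le> n" for u b x
    using that by (intro aq_prefix) auto
  have "(\<Sum>b\<in>BB (Suc n). (\<Prod>u<Suc n. pw u (b u)) * g b) =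
        (\<Sum>b\<in>BB n. \<Sum>x\<in>UNIV. (\<Prod>u<n. pw u (b u)) * (pw n x * g (b(n:=x))))"
    by (simp add: BB_Suc_sum mult.assoc prod_upd_lt)
  also have "\<dots> = (\<Sum>b\<in>BB n. (\<Prod>u<n. pw u (b u)) * G b)"
    by (simp add: G_def sum_distrib_left)
  also have "\<dots> = (\<Sum>b\<in>BB n. (\<Prod>u<n. if aq u b then pw u (b u) else pw' u (b u)) * G b)"
    by (rule Suc.IH[OF revG])
  also have "\<dots> = (\<Sum>b\<in>BB n. \<Sum>x\<in>UNIV. (\<Prod>u<n. if aq u b then pw u (b u) else pw' u (b u)) *
                  ((if aq n b then pw n x else pw' n x) * g (b(n:=x))))"
  proof (rule sum.cong[OF refl])
    fix b assume "b \<in> BB n"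
    have "G b = (\<Sum>x\<in>UNIV. (if aq n b then pw n x else pw' n x) * g (b(n:=x)))"
    proof (cases "aq n b")
      case True then show ?thesis by (simp add: G_def)
    next
      case False
      have const: "g (b(n:=x)) = g (b(n:=False))" for x
      proof -
        have pre: "Qb (b(n:=False)) n = Qb b n" by (rule Qb_prefix) simp
        have "Qb (b(n:=False)) (Suc n) = Qb b n"
          using False by (simp add: Qb_Suc aqupd pre)
        then have "\<forall>u\<in>Qb (b(n:=False)) (Suc n). (b(n:=False)) u = (b(n:=x)) u"
          using Qb_sub[of b n] by auto
        then show ?thesis using Suc.prems unfolding revd_def by blast
      qed
      show ?thesis using False pw[of n] pw'[of n]
        by (simp add: G_def UNIV_bool const[of True] flip: distrib_right)
    qed
    then show "(\<Prod>u<n. if aq u b then pw u (b u) else pw' u (b u)) * G b =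
      (\<Sum>x\<in>UNIV. (\<Prod>u<n. if aq u b then pw u (b u) else pw' u (b u)) *
         ((if aq n b then pw n x else pw' n x) * g (b(n:=x))))"
      by (simp add: sum_distrib_left)
  qed
  also have "\<dots> = (\<Sum>b\<in>BB (Suc n). (\<Prod>u<Suc n. if aq u b then pw u (b u) else pw' u (b u)) * g b)"
  proof -
    have e: "(\<Prod>u<n. if aq u b then pw u ((b(n:=x)) u) else pw' u ((b(n:=x)) u))
           = (\<Prod>u<n. if aq u b then pw u (b u) else pw' u (b u))" for b x
      by (rule prod_upd_lt)
    show ?thesis by (simp add: BB_Suc_sum aqupd mult.assoc e cong: if_cong)
  qed
  finally show ?case .
qed

end

definition pi :: "real \<Rightarrow> bool \<Rightarrow> real" where "pi m x = (if x then 1/2 + m else 1/2 - m)"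

lemma pi_sum: "pi m True + pi m False = 1" by (simp add: pi_def)
lemma pi_nonneg: "\<bar>m\<bar> \<le> 1/2 \<Longrightarrow> 0 \<le> pi m x" by (auto simp: pi_def)

lemma sum_prod_BB:
  assumes "\<And>u. w u True + w u False = (1::real)"
  shows "(\<Sum>b\<in>BB n. \<Prod>u<n. w u (b u)) = 1"
proof (induction n)
  case 0 then show ?case by (simp add: BB_0)
next
  case (Suc n)
  have "(\<Sum>b\<in>BB (Suc n). \<Prod>u<Suc n. w u (b u)) = (\<Sum>b\<in>BB n. \<Sum>x\<in>UNIV. (\<Prod>u<n. w u (b u)) * w n x)"
    by (simp add: BB_Suc_sum prod_upd_lt)
  also have "\<dots> = (\<Sum>b\<in>BB n. (\<Prod>u<n. w u (b u)))"
    using assms[of n] by (simp add: UNIV_bool add.commute flip: distrib_left)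
  finally show ?case using Suc by simp
qed

lemma pointwise_ineq:
  fixes a b f h :: real
  assumes "0 \<le> a" "0 \<le> b"
  shows "a * (f - h)^2 + b * (f + h)^2 \<ge> 4 * h^2 * sqrt (a * b) - h^2 * (a + b)"
proof (cases "a + b = 0")
  case True
  then have "a = 0" "b = 0" using assms by auto
  then show ?thesis by simp
next
  case False
  then have pos: "a + b > 0" using assms by simp
  define K where "K = sqrt (a * b)"
  have K2: "K^2 = a * b" unfolding K_def using assms by simp
  have e1: "(a + b) * (a * (f - h)^2 + b * (f + h)^2) = (a * (f - h) + b * (f + h))^2 + 4 * h^2 * (a * b)"
    by (simp add: power2_eq_square algebra_simps)
  have e2: "4 * h^2 * (a * b) - (a + b) * (4 * h^2 * K - h^2 * (a + b)) = h^2 * (a + b - 2 * K)^2"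
    by (simp add: power2_eq_square algebra_simps K2[unfolded power2_eq_square])
  have "(a + b) * (4 * h^2 * K - h^2 * (a + b)) \<le> (a + b) * (a * (f - h)^2 + b * (f + h)^2)"
    using e1 e2 by (smt (verit) zero_le_power2 mult_nonneg_nonneg)
  then show ?thesis using pos unfolding K_def by (simp add: mult_le_cancel_left_pos)
qed

context
  fixes d :: nat and q :: learner_query and r :: real and xs :: inputs
    and T :: nat and j :: nat and h :: real and m0 :: "nat \<Rightarrow> real"
begin

definition mu :: "real \<Rightarrow> nat \<Rightarrow> real" where
  "mu \<sigma> u = (if u mod d = j then h * \<sigma> else m0 u)"

definition PP :: "real \<Rightarrow> (nat \<Rightarrow> bool) \<Rightarrow> real" where
  "PP \<sigma> b = (\<Prod>u<T. pi (mu \<sigma> u) (b u))"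

definition RR :: "real \<Rightarrow> (nat \<Rightarrow> bool) \<Rightarrow> real" where
  "RR \<sigma> b = (\<Prod>u<T. if aq d q r xs u b then pi (mu \<sigma> u) (b u) else 1/2)"

definition NN :: "(nat \<Rightarrow> bool) \<Rightarrow> nat" where
  "NN b = card {u \<in> Qb d q r xs b T. u mod d = j}"

lemma PP_RR:
  assumes "revd d q r xs T g"
  shows "(\<Sum>b\<in>BB T. PP \<sigma> b * g b) = (\<Sum>b\<in>BB T. RR \<sigma> b * g b)"
  unfolding PP_def RR_def
  by (rule revsum[where pw = "\<lambda>u. pi (mu \<sigma> u)" and pw' = "\<lambda>_ _. 1/2"]) (auto simp: pi_sum assms)

lemma sum_PP: "(\<Sum>b\<in>BB T. PP \<sigma> b) = 1"
  unfolding PP_def by (rule sum_prod_BB) (simp add: pi_sum)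

lemma sum_RR: "(\<Sum>b\<in>BB T. RR \<sigma> b) = 1"
  using PP_RR[of "\<lambda>_. 1" \<sigma>] sum_PP[of \<sigma>] by (simp add: revd_def)

lemma revd_NN: "revd d q r xs T NN"
  unfolding revd_def NN_def using Qb_dep by metis

context
  assumes hh: "0 \<le> h" "4 * h^2 \<le> 1" and hm0: "\<And>u. \<bar>m0 u\<bar> \<le> 1/2"
begin

lemma h_half: "h \<le> 1/2"
proof (rule ccontr)
  assume "\<not> h \<le> 1/2"
  then have "h^2 > (1/2)^2" using hh by (intro power_strict_mono) auto
  then have "1/4 < h^2" by (simp add: power_divide)
  with hh show False by simp
qed

lemma mu_bound: "\<sigma> \<in> {-1,0,1} \<Longrightarrow> \<bar>mu \<sigma> u\<bar> \<le> 1/2"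
  using h_half hh hm0[of u] by (auto simp: mu_def)

lemma RR_nonneg: "\<sigma> \<in> {-1,0,1} \<Longrightarrow> 0 \<le> RR \<sigma> b"
  unfolding RR_def by (intro prod_nonneg) (auto intro!: pi_nonneg mu_bound)

definition rho where "rho = sqrt (1 - 4 * h^2)"

lemma K_eq: "sqrt (RR 1 b * RR (-1) b) = RR 0 b * rho ^ NN b"
proof -
  let ?F = "\<lambda>\<sigma> u. if aq d q r xs u b then pi (mu \<sigma> u) (b u) else 1/2"
  let ?c = "\<lambda>u. if aq d q r xs u b \<and> u mod d = j then rho else 1"
  have rho2: "rho^2 = 1 - 4 * h^2" unfolding rho_def using hh by simp
  have fac: "?F 1 u * ?F (-1) u = (?F 0 u * ?c u)^2" for u
    using rho2 by (auto simp: pi_def mu_def power2_eq_square algebra_simps)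
  have "RR 1 b * RR (-1) b = (\<Prod>u<T. (?F 0 u * ?c u)^2)"
    unfolding RR_def by (simp add: fac flip: prod.distrib)
  also have "\<dots> = (RR 0 b * (\<Prod>u<T. ?c u))^2"
    unfolding RR_def by (simp add: prod.distrib power_mult_distrib prod_power_distrib)
  finally have "sqrt (RR 1 b * RR (-1) b) = \<bar>RR 0 b * (\<Prod>u<T. ?c u)\<bar>" by simp
  also have "\<dots> = RR 0 b * (\<Prod>u<T. ?c u)"
    using RR_nonneg[of 0 b] hh by (intro abs_of_nonneg mult_nonneg_nonneg prod_nonneg) (auto simp: rho_def)
  also have "(\<Prod>u<T. ?c u) = rho ^ NN b"
  proof -
    have "(\<Prod>u<T. ?c u) = (\<Prod>u\<in>{..<T} \<inter> {u. aq d q r xs u b \<and> u mod d = j}. rho)"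
      by (subst prod.If_cases) auto
    also have "{..<T} \<inter> {u. aq d q r xs u b \<and> u mod d = j} = {u \<in> Qb d q r xs b T. u mod d = j}"
      using Qb_mem[of _ T d q r xs b] Qb_sub[of d q r xs b T] by auto
    finally show ?thesis by (simp add: NN_def)
  qed
  finally show ?thesis .
qed

lemma core_ineq:
  assumes f: "revd d q r xs T f"
  shows "(\<Sum>b\<in>BB T. PP 1 b * (f b - h)^2) + (\<Sum>b\<in>BB T. PP (-1) b * (f b + h)^2)
         \<ge> 2 * h^2 - 16 * h^4 * (\<Sum>b\<in>BB T. PP 0 b * NN b)"
proof -
  have r1: "revd d q r xs T (\<lambda>b. (f b - h)^2)" "revd d q r xs T (\<lambda>b. (f b + h)^2)"
    "revd d q r xs T (\<lambda>b. real (NN b))"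
    using f revd_NN unfolding revd_def by metis+
  define K where "K b = sqrt (RR 1 b * RR (-1) b)" for b
  have "(\<Sum>b\<in>BB T. PP 1 b * (f b - h)^2) + (\<Sum>b\<in>BB T. PP (-1) b * (f b + h)^2)
      = (\<Sum>b\<in>BB T. RR 1 b * (f b - h)^2 + RR (-1) b * (f b + h)^2)"
    by (simp add: PP_RR[OF r1(1)] PP_RR[OF r1(2)] sum.distrib)
  also have "\<dots> \<ge> (\<Sum>b\<in>BB T. 4 * h^2 * K b - h^2 * (RR 1 b + RR (-1) b))"
    unfolding K_def by (intro sum_mono pointwise_ineq RR_nonneg) auto
  finally have s1: "(\<Sum>b\<in>BB T. PP 1 b * (f b - h)^2) + (\<Sum>b\<in>BB T. PP (-1) b * (f b + h)^2)
      \<ge> 4 * h^2 * (\<Sum>b\<in>BB T. K b) - 2 * h^2"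
    by (simp add: sum_subtractf sum.distrib sum_RR flip: sum_distrib_left)
  have rho01: "0 \<le> rho" "rho \<le> 1" "1 - rho \<le> 4 * h^2"
  proof -
    show "0 \<le> rho" unfolding rho_def using hh by simp
    show "rho \<le> 1" unfolding rho_def using hh by simp
    have "1 - 4*h^2 \<le> sqrt (1 - 4*h^2)"
    proof -
      have "0 \<le> 1 - 4*h^2" "1 - 4*h^2 \<le> 1" using hh by auto
      then have "(1 - 4*h^2) * (1 - 4*h^2) \<le> 1 * (1 - 4*h^2)"
        by (intro mult_right_mono) auto
      then have "(1 - 4*h^2)^2 \<le> 1 - 4*h^2" by (simp add: power2_eq_square)
      then show ?thesis using \<open>0 \<le> 1 - 4*h^2\<close> by (simp add: real_le_rsqrt)
    qed
    then show "1 - rho \<le> 4 * h^2" unfolding rho_def by simp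
  qed
  have kb: "K b \<ge> RR 0 b - (1 - rho) * (RR 0 b * NN b)" for b
  proof -
    have "1 + real (NN b) * (rho - 1) \<le> (1 + (rho - 1)) ^ NN b"
      by (rule Bernoulli_inequality) (use rho01 in simp)
    then have "1 - (1 - rho) * NN b \<le> rho ^ NN b" by (simp add: algebra_simps)
    from mult_left_mono[OF this RR_nonneg[of 0 b]]
    show ?thesis unfolding K_def K_eq by (simp add: algebra_simps)
  qed
  have "(\<Sum>b\<in>BB T. K b) \<ge> (\<Sum>b\<in>BB T. RR 0 b - (1 - rho) * (RR 0 b * NN b))"
    by (intro sum_mono kb)
  also have "(\<Sum>b\<in>BB T. RR 0 b - (1 - rho) * (RR 0 b * NN b)) = 1 - (1 - rho) * (\<Sum>b\<in>BB T. PP 0 b * NN b)"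
    by (simp add: sum_subtractf sum_RR PP_RR[OF r1(3)] flip: sum_distrib_left)
  finally have s2: "(\<Sum>b\<in>BB T. K b) \<ge> 1 - (1 - rho) * (\<Sum>b\<in>BB T. PP 0 b * NN b)" .
  have E0: "0 \<le> (\<Sum>b\<in>BB T. PP 0 b * NN b)"
    unfolding PP_def using mu_bound[of 0] by (intro sum_nonneg mult_nonneg_nonneg prod_nonneg pi_nonneg) auto
  have "(1 - rho) * (\<Sum>b\<in>BB T. PP 0 b * NN b) \<le> 4 * h^2 * (\<Sum>b\<in>BB T. PP 0 b * NN b)"
    by (rule mult_right_mono[OF rho01(3) E0])
  with s2 have "(\<Sum>b\<in>BB T. K b) \<ge> 1 - 4 * h^2 * (\<Sum>b\<in>BB T. PP 0 b * NN b)" by linarith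
  then have "4 * h^2 * (\<Sum>b\<in>BB T. K b) \<ge> 4 * h^2 * (1 - 4 * h^2 * (\<Sum>b\<in>BB T. PP 0 b * NN b))"
    by (intro mult_left_mono) auto
  with s1 show ?thesis by (simp add: algebra_simps power4_eq_xxxx power2_eq_square)
qed

end
end

lemma queried_sub: "queried d q r xs y n \<subseteq> {..<n}"
  by (induction n) auto

lemma queried_prefix: "\<forall>u<n. y u = y' u \<Longrightarrow> queried d q r xs y' n = queried d q r xs y n"
proof (induction n)
  case 0 then show ?case by simp
next
  case (Suc n)
  then have IH: "queried d q r xs y' n = queried d q r xs y n" by simp
  have "seen_labels (queried d q r xs y' n) y' = seen_labels (queried d q r xs y n) y"
    using IH Suc.prems queried_sub[of d q r xs y n] by (auto simp: seen_labels_def fun_eq_iff)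
  then show ?case using IH by simp
qed

lemma prediction_prefix: "\<forall>u<t. y u = y' u \<Longrightarrow> prediction d p q r xs y' t = prediction d p q r xs y t"
proof -
  assume a: "\<forall>u<t. y u = y' u"
  have "seen_labels (queried d q r xs y' t) y' = seen_labels (queried d q r xs y t) y"
    using queried_prefix[OF a] a queried_sub[of d q r xs y t] by (auto simp: seen_labels_def fun_eq_iff)
  then show ?thesis by (simp add: prediction_def)
qed

lemma card_mod_class: "0 < d \<Longrightarrow> card {t. t < T \<and> t mod d = k} \<le> T div d + 1"
proof -
  assume d: "0 < (d::nat)"
  have "inj_on (\<lambda>t. t div d) {t. t < T \<and> t mod d = k}"
  proof (rule inj_onI)
    fix x y assume x: "x \<in> {t. t < T \<and> t mod d = k}" and y: "y \<in> {t. t < T \<and> t mod d = k}"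
      and e: "x div d = y div d"
    have m: "x mod d = y mod d" using x y by simp
    have "x = x div d * d + x mod d" by simp
    also have "\<dots> = y div d * d + y mod d" using e m by simp
    also have "\<dots> = y" by simp
    finally show "x = y" .
  qed
  moreover have "(\<lambda>t. t div d) ` {t. t < T \<and> t mod d = k} \<subseteq> {..T div d}"
  proof
    fix z assume "z \<in> (\<lambda>t. t div d) ` {t. t < T \<and> t mod d = k}"
    then obtain t where "t < T" "z = t div d" by auto
    then show "z \<in> {..T div d}" by (simp add: div_le_mono)
  qed
  ultimately have "card {t. t < T \<and> t mod d = k} \<le> card {..T div d}"
    by (intro card_inj_on_le) auto
  then show ?thesis by simp
qed

lemma count_sum:
  assumes d: "0 < d" and Q: "Q \<subseteq> {..<T}"
  shows "(\<Sum>t<T. card {u \<in> Q. u mod d = t mod (d::nat)}) \<le> card Q * (T div d + 1)"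
proof -
  have fQ: "finite Q" using Q finite_subset by blast
  have "(\<Sum>t<T. card {u \<in> Q. u mod d = t mod d}) = (\<Sum>t<T. \<Sum>u\<in>Q. if u mod d = t mod d then 1 else 0)"
  proof (rule sum.cong[OF refl])
    fix t
    have "{u \<in> Q. u mod d = t mod d} = Q \<inter> {u. u mod d = t mod d}" by auto
    then show "card {u \<in> Q. u mod d = t mod d} = (\<Sum>u\<in>Q. if u mod d = t mod d then 1 else 0)"
      using fQ by (simp add: sum.If_cases)
  qed
  also have "\<dots> = (\<Sum>u\<in>Q. \<Sum>t<T. if u mod d = t mod d then 1 else 0)"
    by (rule sum.swap)
  also have "\<dots> = (\<Sum>u\<in>Q. card {t. t < T \<and> t mod d = u mod d})"
  proof (rule sum.cong[OF refl])
    fix u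
    have "{t \<in> {..<T}. u mod d = t mod d} = {t. t < T \<and> t mod d = u mod d}" by auto
    then show "(\<Sum>t<T. if u mod d = t mod d then 1 else 0) = card {t. t < T \<and> t mod d = u mod d}"
      by (simp add: sum.If_cases Int_def)
  qed
  also have "\<dots> \<le> (\<Sum>u\<in>Q. T div d + 1)"
    by (intro sum_mono card_mod_class d)
  finally show ?thesis by simp
qed

definition SS :: "nat \<Rightarrow> (nat \<Rightarrow> real) set" where
  "SS d = PiE_dflt {..<d} 0 (\<lambda>_. {-1,0,1})"

lemma finite_SS: "finite (SS d)"
  unfolding SS_def by (rule finite_PiE_dflt) auto

lemma card_SS: "card (SS d) = 3 ^ d"
  unfolding SS_def by (subst card_PiE_dflt) (auto simp: numeral_3_eq_3)

lemma SS_split: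
  fixes F :: "(nat \<Rightarrow> real) \<Rightarrow> 'a::comm_monoid_add"
  assumes j: "j < d"
  shows "(\<Sum>s\<in>SS d. F s) = (\<Sum>s'\<in>{s \<in> SS d. s j = 0}. \<Sum>\<sigma>\<in>{-1,0,1}. F (s'(j:=\<sigma>)))"
proof -
  have bij: "bij_betw (\<lambda>(s,x). s(j:=x)) ({s \<in> SS d. s j = 0} \<times> {-1,0,1}) (SS d)"
  proof (rule bij_betwI')
    fix bx cy assume A: "bx \<in> {s \<in> SS d. s j = 0} \<times> {-1,0,1::real}" "cy \<in> {s \<in> SS d. s j = 0} \<times> {-1,0,1::real}"
    obtain b x where bx: "bx = (b, x)" by (cases bx)
    obtain c y where cy: "cy = (c, y)" by (cases cy)
    have bn: "b j = 0" "c j = 0" using A bx cy by auto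
    have "(b(j:=x) = c(j:=y)) = (b = c \<and> x = y)"
    proof
      assume e: "b(j:=x) = c(j:=y)"
      have "x = y" using fun_cong[OF e, of j] by simp
      moreover have "b = c"
      proof
        fix u show "b u = c u" using fun_cong[OF e, of u] bn by (cases "u = j") auto
      qed
      ultimately show "b = c \<and> x = y" by simp
    qed simp
    then show "((case bx of (b, x) \<Rightarrow> b(j := x)) = (case cy of (b, x) \<Rightarrow> b(j := x))) = (bx = cy)"
      by (simp add: bx cy)
  next
    fix bx assume "bx \<in> {s \<in> SS d. s j = 0} \<times> {-1,0,1::real}"
    then show "(case bx of (b, x) \<Rightarrow> b(j := x)) \<in> SS d"
      using j by (cases bx) (auto simp: SS_def PiE_dflt_def)
  next
    fix c assume c: "c \<in> SS d"
    show "\<exists>bx\<in>{s \<in> SS d. s j = 0} \<times> {-1,0,1}. c = (case bx of (b, x) \<Rightarrow> b(j := x))"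
      by (rule bexI[of _ "(c(j:=0), c j)"]) (use c j in \<open>auto simp: SS_def PiE_dflt_def\<close>)
  qed
  have "(\<Sum>s\<in>SS d. F s) = (\<Sum>bx\<in>{s \<in> SS d. s j = 0} \<times> {-1,0,1}. F (case bx of (b, x) \<Rightarrow> b(j := x)))"
    using sum.reindex_bij_betw[OF bij, of F] by simp
  also have "\<dots> = (\<Sum>s'\<in>{s \<in> SS d. s j = 0}. \<Sum>\<sigma>\<in>{-1,0,1}. F (s'(j:=\<sigma>)))"
    by (simp only: sum.cartesian_product prod.case_distrib)
  finally show ?thesis .
qed

lemma swap3:
  fixes w :: real
  shows "(\<Sum>s\<in>S. w * (\<Sum>b\<in>Bs. P s b * (\<Sum>t\<in>TT. X t s b))) = (\<Sum>t\<in>TT. \<Sum>s\<in>S. w * (\<Sum>b\<in>Bs. P s b * X t s b))"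
proof -
  have "(\<Sum>s\<in>S. w * (\<Sum>b\<in>Bs. P s b * (\<Sum>t\<in>TT. X t s b))) = (\<Sum>s\<in>S. \<Sum>b\<in>Bs. \<Sum>t\<in>TT. w * (P s b * X t s b))"
    by (simp add: sum_distrib_left)
  also have "\<dots> = (\<Sum>s\<in>S. \<Sum>t\<in>TT. \<Sum>b\<in>Bs. w * (P s b * X t s b))"
    by (rule sum.cong[OF refl], rule sum.swap)
  also have "\<dots> = (\<Sum>t\<in>TT. \<Sum>s\<in>S. \<Sum>b\<in>Bs. w * (P s b * X t s b))"
    by (rule sum.swap)
  also have "\<dots> = (\<Sum>t\<in>TT. \<Sum>s\<in>S. w * (\<Sum>b\<in>Bs. P s b * X t s b))"
    by (simp add: sum_distrib_left)
  finally show ?thesis .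
qed

lemma abs_half: "0 \<le> (h::real) \<Longrightarrow> h \<le> 1/2 \<Longrightarrow> \<bar>x\<bar> \<le> 1 \<Longrightarrow> \<bar>h * x\<bar> \<le> 1/2"
proof -
  assume a: "0 \<le> h" "h \<le> 1/2" "\<bar>x\<bar> \<le> 1"
  have "h * \<bar>x\<bar> \<le> h * 1" using a by (intro mult_left_mono) auto
  then show ?thesis using a by (simp add: abs_mult)
qed

lemma SS_bound: "s \<in> SS d \<Longrightarrow> \<bar>s i\<bar> \<le> 1"
proof -
  assume "s \<in> SS d"
  then have "s i \<in> {-1,0,1}" by (cases "i < d") (auto simp: SS_def PiE_dflt_def)
  then show ?thesis by auto
qed

context
  fixes d T B :: nat and p :: learner_pred and q :: learner_query and r :: real
  assumes dpos: "0 < d" and dT: "d \<le> T" and Bpos: "0 < B" and dB: "d \<le> B"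
    and bud: "respects_budget d T B q"
begin

definition xsA :: inputs where "xsA u = (\<lambda>i. if u < T \<and> i = u mod d then 1 else 0)"

definition hA :: real where "hA = sqrt (real d / (96 * real B))"

definition PPs :: "(nat \<Rightarrow> real) \<Rightarrow> (nat \<Rightarrow> bool) \<Rightarrow> real" where
  "PPs s b = (\<Prod>u<T. pi (hA * s (u mod d)) (b u))"

definition ff :: "nat \<Rightarrow> (nat \<Rightarrow> bool) \<Rightarrow> real" where
  "ff t b = prediction d p q r xsA (labb b) t"

lemma hA2: "hA^2 = real d / (96 * real B)"
  unfolding hA_def using Bpos by simp

lemma hA_nonneg: "0 \<le> hA" unfolding hA_def by simp

lemma hA_small: "4 * hA^2 \<le> 1"
proof -
  have "real d \<le> real B" using dB by simp
  then have "real d / (96 * real B) \<le> 1/96" using Bpos by (simp add: field_simps)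
  then show ?thesis using hA2 by simp
qed

lemma hA_half: "hA \<le> 1/2"
proof (rule ccontr)
  assume "\<not> hA \<le> 1/2"
  then have "hA^2 > (1/2)^2" using hA_nonneg by (intro power_strict_mono) auto
  then have "1/4 < hA^2" by (simp add: power_divide)
  with hA_small show False by simp
qed

lemma hA_le1: "hA \<le> 1" using hA_half by simp

lemma PPs_nonneg: "s \<in> SS d \<Longrightarrow> 0 \<le> PPs s b"
  unfolding PPs_def
proof (intro prod_nonneg pi_nonneg)
  fix u assume "s \<in> SS d"
  then have "\<bar>s (u mod d)\<bar> \<le> 1" by (rule SS_bound)
  then show "\<bar>hA * s (u mod d)\<bar> \<le> 1/2" using hA_half hA_nonneg abs_half by blast
qed

lemma sum_PPs: "(\<Sum>b\<in>BB T. PPs s b) = 1"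
  unfolding PPs_def by (rule sum_prod_BB) (simp add: pi_sum)

lemma PP_PPs: "PP d T j hA (\<lambda>u. hA * s' (u mod d)) \<sigma> b = PPs (s'(j:=\<sigma>)) b"
  unfolding PP_def PPs_def mu_def by (intro prod.cong refl) auto

lemma revd_ff: "t \<le> T \<Longrightarrow> revd d q r xsA T (ff t)"
  unfolding revd_def
proof (intro allI impI)
  fix b b' assume t: "t \<le> T" and ag: "\<forall>u\<in>Qb d q r xsA b T. b u = b' u"
  then have ag': "\<forall>u\<in>Qb d q r xsA b t. b u = b' u" using Qb_mono[OF t, of d q r xsA b] by auto
  have "seen_labels (Qb d q r xsA b' t) (labb b') = seen_labels (Qb d q r xsA b t) (labb b)"
    using Qb_dep[OF ag'] ag' by (auto simp: seen_labels_def labb_def fun_eq_iff)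
  then show "ff t b' = ff t b" by (simp add: ff_def prediction_def Qb_def)
qed

definition ww :: real where "ww = (1/3)^d"

lemma sum_ww: "(\<Sum>s\<in>SS d. ww) = 1"
  by (simp add: card_SS ww_def power_one_over)

lemma sum_ww0: "j < d \<Longrightarrow> (\<Sum>s\<in>{s \<in> SS d. s j = 0}. ww) = 1/3"
proof -
  assume j: "j < d"
  have "(\<Sum>s\<in>SS d. ww) = (\<Sum>s'\<in>{s \<in> SS d. s j = 0}. \<Sum>\<sigma>\<in>{-1,0,1::real}. ww)"
    by (rule SS_split[OF j])
  also have "\<dots> = 3 * (\<Sum>s'\<in>{s \<in> SS d. s j = 0}. ww)"
    by (simp add: sum_distrib_left)
  finally have e: "(\<Sum>s\<in>SS d. ww) = 3 * (\<Sum>s'\<in>{s \<in> SS d. s j = 0}. ww)" .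
  show ?thesis using e sum_ww by linarith
qed

lemma per_round:
  assumes t: "t < T"
  defines "j \<equiv> t mod d"
  shows "(\<Sum>s\<in>SS d. ww * (\<Sum>b\<in>BB T. PPs s b * (ff t b - hA * s j)^2))
       \<ge> 2 * hA^2 / 3 - 16 * hA^4 * (\<Sum>s\<in>SS d. ww * (\<Sum>b\<in>BB T. PPs s b * NN d q r xsA T j b))"
proof -
  have j: "j < d" unfolding j_def using dpos by simp
  let ?E = "\<lambda>s. (\<Sum>b\<in>BB T. PPs s b * NN d q r xsA T j b)"
  have Enn: "s \<in> SS d \<Longrightarrow> 0 \<le> ?E s" for s
    by (intro sum_nonneg mult_nonneg_nonneg PPs_nonneg) auto
  have inner: "(\<Sum>\<sigma>\<in>{-1,0,1}. ww * (\<Sum>b\<in>BB T. PPs (s'(j:=\<sigma>)) b * (ff t b - hA * (s'(j:=\<sigma>)) j)^2))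
       \<ge> ww * (2 * hA^2 - 16 * hA^4 * ?E s')" if s': "s' \<in> {s \<in> SS d. s j = 0}" for s'
  proof -
    have m0b: "\<bar>(\<lambda>u. hA * s' (u mod d)) u\<bar> \<le> 1/2" for u
    proof -
      have "\<bar>s' (u mod d)\<bar> \<le> 1" using s' SS_bound by auto
      then show ?thesis using hA_half hA_nonneg abs_half by auto
    qed
    have s'0: "s'(j:=0) = s'" using s' by auto
    have ci: "2*hA^2 - 16*hA^4 * ?E s' \<le> (\<Sum>b\<in>BB T. PPs (s'(j:=1)) b * (ff t b - hA)^2)
               + (\<Sum>b\<in>BB T. PPs (s'(j:=-1)) b * (ff t b + hA)^2)"
    proof -
      have rv: "revd d q r xsA T (ff t)" using revd_ff t by simp
      have m0b': "\<And>u. \<bar>hA * s' (u mod d)\<bar> \<le> 1/2" using m0b by simp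
      show ?thesis
        using core_ineq[of hA "\<lambda>u. hA * s' (u mod d)" d q r xsA T "ff t" j, OF hA_nonneg hA_small m0b' rv] s'0
        by (simp add: PP_PPs)
    qed
    have z: "0 \<le> (\<Sum>b\<in>BB T. PPs (s'(j:=0)) b * (ff t b - hA * 0)^2)"
      using s' by (intro sum_nonneg mult_nonneg_nonneg PPs_nonneg) (auto simp: s'0)
    have wwn: "0 \<le> ww" by (simp add: ww_def)
    have "ww * (2 * hA^2 - 16 * hA^4 * ?E s') \<le> ww * ((\<Sum>b\<in>BB T. PPs (s'(j:=1)) b * (ff t b - hA)^2)
               + (\<Sum>b\<in>BB T. PPs (s'(j:=-1)) b * (ff t b + hA)^2)
               + (\<Sum>b\<in>BB T. PPs (s'(j:=0)) b * (ff t b - hA * 0)^2))"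
      using ci z wwn by (intro mult_left_mono) auto
    also have "\<dots> = (\<Sum>\<sigma>\<in>{-1,0,1}. ww * (\<Sum>b\<in>BB T. PPs (s'(j:=\<sigma>)) b * (ff t b - hA * (s'(j:=\<sigma>)) j)^2))"
      by (simp add: algebra_simps)
    finally show ?thesis .
  qed
  have "(\<Sum>s\<in>SS d. ww * (\<Sum>b\<in>BB T. PPs s b * (ff t b - hA * s j)^2))
      = (\<Sum>s'\<in>{s \<in> SS d. s j = 0}. \<Sum>\<sigma>\<in>{-1,0,1}. ww * (\<Sum>b\<in>BB T. PPs (s'(j:=\<sigma>)) b * (ff t b - hA * (s'(j:=\<sigma>)) j)^2))"
    by (rule SS_split[OF j])
  also have "\<dots> \<ge> (\<Sum>s'\<in>{s \<in> SS d. s j = 0}. ww * (2 * hA^2 - 16 * hA^4 * ?E s'))"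
    by (intro sum_mono inner)
  finally have s1: "(\<Sum>s\<in>SS d. ww * (\<Sum>b\<in>BB T. PPs s b * (ff t b - hA * s j)^2))
     \<ge> 2 * hA^2 * (\<Sum>s'\<in>{s \<in> SS d. s j = 0}. ww) - 16 * hA^4 * (\<Sum>s'\<in>{s \<in> SS d. s j = 0}. ww * ?E s')"
    by (simp add: algebra_simps sum_subtractf sum_distrib_left)
  have "(\<Sum>s'\<in>{s \<in> SS d. s j = 0}. ww * ?E s') \<le> (\<Sum>s\<in>SS d. ww * ?E s)"
    by (rule sum_mono2) (auto simp: finite_SS ww_def intro!: mult_nonneg_nonneg Enn)
  then have "16 * hA^4 * (\<Sum>s'\<in>{s \<in> SS d. s j = 0}. ww * ?E s') \<le> 16 * hA^4 * (\<Sum>s\<in>SS d. ww * ?E s)"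
    by (intro mult_left_mono) auto
  moreover have "2 * hA^2 * (\<Sum>s'\<in>{s \<in> SS d. s j = 0}. ww) = 2 * hA^2 / 3"
    using sum_ww0[OF j] by (simp add: algebra_simps)
  ultimately show ?thesis using s1 by linarith
qed

lemma NN_total: "(\<Sum>t<T. real (NN d q r xsA T (t mod d) b)) \<le> 2 * real T * real B / real d"
proof -
  let ?Q = "Qb d q r xsA b T"
  have "(\<Sum>t<T. NN d q r xsA T (t mod d) b) \<le> card ?Q * (T div d + 1)"
    unfolding NN_def by (rule count_sum[OF dpos Qb_sub])
  also have "card ?Q \<le> B" using bud unfolding respects_budget_def Qb_def by blast
  then have "card ?Q * (T div d + 1) \<le> B * (T div d + 1)" by (rule mult_right_mono) simp
  finally have n1: "(\<Sum>t<T. NN d q r xsA T (t mod d) b) \<le> B * (T div d + 1)" .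
  have "(T div d) * d \<le> T" using div_mult_mod_eq[of T d] by linarith
  moreover have "(T div d + 1) * d = T div d * d + d" by (simp add: algebra_simps)
  ultimately have "(T div d + 1) * d \<le> 2 * T" using dT by linarith
  then have "real ((T div d + 1) * d) \<le> real (2 * T)" by (simp only: of_nat_le_iff)
  then have "real (T div d + 1) * real d \<le> 2 * real T" by (simp add: algebra_simps)
  then have n2: "real (T div d + 1) \<le> 2 * real T / real d" using dpos by (simp add: field_simps)
  have "(\<Sum>t<T. real (NN d q r xsA T (t mod d) b)) \<le> real B * real (T div d + 1)"
  proof -
    have "real (\<Sum>t<T. NN d q r xsA T (t mod d) b) \<le> real (B * (T div d + 1))"
      using n1 by (simp only: of_nat_le_iff)
    then show ?thesis by (simp add: algebra_simps)
  qed
  also have "\<dots> \<le> real B * (2 * real T / real d)" by (intro mult_left_mono n2) simp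
  finally show ?thesis by (simp add: algebra_simps)
qed

lemma main_real:
  "(\<Sum>s\<in>SS d. ww * (\<Sum>b\<in>BB T. PPs s b * (\<Sum>t<T. (ff t b - hA * s (t mod d))^2)))
     \<ge> hA^2 * real T / 3"
proof -
  let ?E = "\<lambda>j. (\<Sum>s\<in>SS d. ww * (\<Sum>b\<in>BB T. PPs s b * NN d q r xsA T j b))"
  have "(\<Sum>s\<in>SS d. ww * (\<Sum>b\<in>BB T. PPs s b * (\<Sum>t<T. (ff t b - hA * s (t mod d))^2)))
      = (\<Sum>t<T. \<Sum>s\<in>SS d. ww * (\<Sum>b\<in>BB T. PPs s b * (ff t b - hA * s (t mod d))^2))"
    by (rule swap3)
  also have "\<dots> \<ge> (\<Sum>t<T. 2 * hA^2 / 3 - 16 * hA^4 * ?E (t mod d))"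
    by (intro sum_mono per_round) simp
  finally have s1: "(\<Sum>s\<in>SS d. ww * (\<Sum>b\<in>BB T. PPs s b * (\<Sum>t<T. (ff t b - hA * s (t mod d))^2)))
      \<ge> 2 * hA^2 / 3 * real T - 16 * hA^4 * (\<Sum>t<T. ?E (t mod d))"
    by (simp add: sum_subtractf mult.commute flip: sum_distrib_left)
  have "(\<Sum>t<T. ?E (t mod d)) = (\<Sum>s\<in>SS d. ww * (\<Sum>b\<in>BB T. PPs s b * (\<Sum>t<T. real (NN d q r xsA T (t mod d) b))))"
    by (rule swap3[symmetric])
  also have "\<dots> \<le> (\<Sum>s\<in>SS d. ww * (\<Sum>b\<in>BB T. PPs s b * (2 * real T * real B / real d)))"
    by (intro sum_mono mult_left_mono NN_total PPs_nonneg) (auto simp: ww_def)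
  also have "\<dots> = (\<Sum>s\<in>SS d. ww) * (2 * real T * real B / real d)"
  proof -
    have i: "(\<Sum>b\<in>BB T. PPs s b * K) = K" for s K
      using sum_PPs[of s] by (simp flip: sum_distrib_right)
    show ?thesis by (simp only: i sum_distrib_right)
  qed
  also have "\<dots> = 2 * real T * real B / real d" by (simp only: sum_ww mult_1)
  finally have s2: "(\<Sum>t<T. ?E (t mod d)) \<le> 2 * real T * real B / real d" .
  have "16 * hA^4 * (\<Sum>t<T. ?E (t mod d)) \<le> 16 * hA^4 * (2 * real T * real B / real d)"
    by (intro mult_left_mono s2) simp
  also have "\<dots> = hA^2 * real T / 3"
  proof -
    have e: "hA^4 = hA^2 * hA^2" by (simp add: power4_eq_xxxx power2_eq_square)
    from e hA2 have "hA^4 = hA^2 * (real d / (96 * real B))" by simp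
    then show ?thesis using dpos Bpos by (simp add: field_simps)
  qed
  finally have s3: "16 * hA^4 * (\<Sum>t<T. ?E (t mod d)) \<le> hA^2 * real T / 3" .
  have "2 * hA^2 / 3 * real T = 2 * (hA^2 * real T / 3)" by simp
  then show ?thesis using s1 s3 by linarith
qed

end

lemma Pi_pmf_map_dep:
  assumes "finite A"
  shows "Pi_pmf A dflt (\<lambda>x. map_pmf (f x) (g x)) =
         map_pmf (\<lambda>h x. if x \<in> A then f x (h x) else dflt) (Pi_pmf A d' g)"
proof -
  have "Pi_pmf A dflt (\<lambda>x. map_pmf (f x) (g x)) =
        Pi_pmf A dflt (\<lambda>x. g x \<bind> (\<lambda>y. return_pmf (f x y)))"
    by (simp add: map_pmf_def)
  also have "\<dots> = Pi_pmf A d' g \<bind> (\<lambda>h. Pi_pmf A dflt (\<lambda>x. return_pmf (f x (h x))))"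
    by (rule Pi_pmf_bind[OF assms])
  also have "\<dots> = Pi_pmf A d' g \<bind> (\<lambda>h. return_pmf (\<lambda>x. if x \<in> A then f x (h x) else dflt))"
    using assms by simp
  also have "\<dots> = map_pmf (\<lambda>h x. if x \<in> A then f x (h x) else dflt) (Pi_pmf A d' g)"
    by (simp add: map_pmf_def)
  finally show ?thesis .
qed

lemma sum_delta_mult: "k < (d::nat) \<Longrightarrow> (\<Sum>i<d. f i * (if i = k then 1 else 0)) = (f k :: real)"
proof -
  assume k: "k < d"
  have "(\<Sum>i<d. f i * (if i = k then 1 else 0)) = (\<Sum>i<d. if i = k then f i else 0)"
    by (rule sum.cong) auto
  also have "\<dots> = f k" using k by (simp add: sum.delta')
  finally show ?thesis .
qed

definition advP :: "nat \<Rightarrow> nat \<Rightarrow> nat \<Rightarrow> (vec \<times> inputs) pmf" where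
  "advP d T B = map_pmf (\<lambda>s. (\<lambda>i. hA d B * s i, xsA d T)) (Pi_pmf {..<d} 0 (\<lambda>_. pmf_of_set {-1,0,1}))"

definition advN :: "nat \<Rightarrow> vec \<Rightarrow> inputs \<Rightarrow> nat \<Rightarrow> real pmf" where
  "advN d \<theta> xs t = noiseD (ip d \<theta> (xs t))"

lemma set_sPi: "set_pmf (Pi_pmf {..<d} 0 (\<lambda>_. pmf_of_set {-1,0,1::real})) = SS d"
  by (simp add: set_Pi_pmf SS_def o_def)

lemma vnorm_theta:
  assumes "s \<in> SS d" "0 \<le> h" "h \<le> 1"
  shows "vnorm d (\<lambda>i. h * s i) \<le> sqrt (real d)"
proof -
  have "(\<Sum>i<d. (h * s i)^2) \<le> (\<Sum>i<d. 1)"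
  proof (rule sum_mono)
    fix i
    have a: "\<bar>h * s i\<bar> \<le> 1"
    proof -
      have "\<bar>s i\<bar> \<le> 1" using SS_bound[OF assms(1)] .
      then have "h * \<bar>s i\<bar> \<le> 1 * 1" using assms by (intro mult_mono) auto
      then show ?thesis using assms by (simp add: abs_mult)
    qed
    have "(h * s i)^2 = \<bar>h * s i\<bar>^2" by simp
    also have "\<dots> \<le> 1^2" using a by (intro power_mono) auto
    finally show "(h * s i)^2 \<le> 1" by simp
  qed
  then show ?thesis unfolding vnorm_def by simp
qed

context
  fixes d T B :: nat and p :: learner_pred and q :: learner_query and r :: real
  assumes dpos: "0 < d" and dT: "d \<le> T" and Bpos: "0 < B" and dB: "d \<le> B"
    and bud: "respects_budget d T B q"
begin

lemma ip_xsA: "ip d (\<lambda>i. h * s i) (xsA d T t) = (if t < T then h * s (t mod d) else 0)"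
proof -
  have d: "0 < d" by (rule dpos)
  have "t mod d \<in> {..<d}" using d by simp
  have x: "xsA d T t = (\<lambda>i. if t < T \<and> i = t mod d then 1 else 0)" by (simp add: xsA_def[OF dpos dT Bpos dB bud])
  have "(\<Sum>i<d. h * s i * (if t < T \<and> i = t mod d then 1 else 0)) = (if t < T then h * s (t mod d) else 0)"
    using \<open>t mod d \<in> {..<d}\<close> sum_delta_mult[of "t mod d" d "\<lambda>i. h * s i"] by auto
  then show ?thesis unfolding ip_def x by simp
qed

lemma vnorm_xsA: "t < T \<Longrightarrow> vnorm d (xsA d T t) = 1"
proof -
  have d: "0 < d" by (rule dpos)
  assume t: "t < T"
  have "t mod d \<in> {..<d}" using d by simp
  have x: "xsA d T t = (\<lambda>i. if t < T \<and> i = t mod d then 1 else 0)" by (simp add: xsA_def[OF dpos dT Bpos dB bud])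
  have "(\<Sum>i<d. (if t < T \<and> i = t mod d then 1 else 0::real)^2) = 1"
  proof -
    have "(\<Sum>i<d. (if t < T \<and> i = t mod d then 1 else 0::real)^2) = (\<Sum>i<d. (\<lambda>i. 1) i * (if i = t mod d then 1 else 0))"
      using t by (intro sum.cong) auto
    then show ?thesis using \<open>t mod d \<in> {..<d}\<close> sum_delta_mult[of "t mod d" d "\<lambda>i. 1"] by simp
  qed
  then have "(\<Sum>i<d. (xsA d T t i)^2) = 1" unfolding x .
  then show ?thesis by (simp add: vnorm_def)
qed

lemma valid: "valid_adversary d T (advP d T B) (advN d)"
  unfolding valid_adversary_def
proof (intro ballI, clarify)
  fix \<theta> xs assume "(\<theta>, xs) \<in> set_pmf (advP d T B)"
  then obtain s where s: "s \<in> SS d" and th: "\<theta> = (\<lambda>i. hA d B * s i)" and x: "xs = xsA d T"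
    unfolding advP_def by (auto simp: set_sPi)
  have h: "0 \<le> hA d B" "hA d B \<le> 1/2"
    using hA_nonneg[OF dpos dT Bpos dB bud] hA_half[OF dpos dT Bpos dB bud] by auto
  have ipb: "\<bar>ip d \<theta> (xs t)\<bar> \<le> 1/2" if "t < T" for t
    using ip_xsA that abs_half[OF h, of "s (t mod d)"] SS_bound[OF s] th x by simp
  show "vnorm d \<theta> \<le> sqrt (real d) \<and>
       (\<forall>t<T. vnorm d (xs t) \<le> 1 \<and> \<bar>ip d \<theta> (xs t)\<bar> \<le> 1 \<and>
              zero_mean_pmf (advN d \<theta> xs t) \<and> sub_gaussian_pmf (advN d \<theta> xs t) (1 / 4))"
  proof (intro conjI allI impI)
    show "vnorm d \<theta> \<le> sqrt (real d)" unfolding th using vnorm_theta[OF s] h by simp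
  next
    fix t assume t: "t < T"
    show "vnorm d (xs t) \<le> 1" using vnorm_xsA[OF t] x by simp
    show "\<bar>ip d \<theta> (xs t)\<bar> \<le> 1" using ipb[OF t] by simp
    show "zero_mean_pmf (advN d \<theta> xs t)" unfolding advN_def by (rule noise_mean[OF ipb[OF t]])
    show "sub_gaussian_pmf (advN d \<theta> xs t) (1/4)" unfolding advN_def by (rule noise_subg[OF ipb[OF t]])
  qed
qed

definition Rg :: "(nat \<Rightarrow> real) \<Rightarrow> (nat \<Rightarrow> bool) \<Rightarrow> real" where
  "Rg s b = (\<Sum>t<T. (ff d T p q r t b - hA d B * s (t mod d))^2)"

lemma inner_xi:
  assumes s: "s \<in> SS d"
  shows "(\<integral>\<^sup>+\<xi>. ennreal (regret d T p q r (\<lambda>i. hA d B * s i) (xsA d T) \<xi>)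
            \<partial>measure_pmf (Pi_pmf {..<T} 0 (advN d (\<lambda>i. hA d B * s i) (xsA d T))))
         = ennreal (\<Sum>b\<in>BB T. PPs d T B s b * Rg s b)"
proof -
  define \<theta> where "\<theta> = (\<lambda>i. hA d B * s i)"
  define \<mu> where "\<mu> t = ip d \<theta> (xsA d T t)" for t
  have h: "0 \<le> hA d B" "hA d B \<le> 1/2"
    using hA_nonneg[OF dpos dT Bpos dB bud] hA_half[OF dpos dT Bpos dB bud] by auto
  have mu_eq: "\<mu> t = (if t < T then hA d B * s (t mod d) else 0)" for t
    unfolding \<mu>_def \<theta>_def by (rule ip_xsA)
  have mub: "\<bar>\<mu> t\<bar> \<le> 1/2" for t
    using mu_eq[of t] abs_half[OF h, of "s (t mod d)"] SS_bound[OF s] by simp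
  define \<xi>b where "\<xi>b b = (\<lambda>t. if t \<in> {..<T} then lab1 (b t) - \<mu> t else 0)" for b
  have Pi_eq: "Pi_pmf {..<T} 0 (advN d \<theta> (xsA d T)) =
      map_pmf \<xi>b (Pi_pmf {..<T} False (\<lambda>t. bernoulli_pmf (1/2 + \<mu> t)))"
    unfolding advN_def noiseD_def \<xi>b_def \<mu>_def by (rule Pi_pmf_map_dep) simp
  have sub: "set_pmf (Pi_pmf {..<T} False (\<lambda>t. bernoulli_pmf (1/2 + \<mu> t))) \<subseteq> BB T"
    using set_Pi_pmf_subset[of "{..<T}" False] by (auto simp: BB_def PiE_dflt_def)
  have pmfb: "pmf (Pi_pmf {..<T} False (\<lambda>t. bernoulli_pmf (1/2 + \<mu> t))) b = PPs d T B s b"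
    if b: "b \<in> BB T" for b
  proof -
    have "pmf (Pi_pmf {..<T} False (\<lambda>t. bernoulli_pmf (1/2 + \<mu> t))) b
        = (\<Prod>t<T. pmf (bernoulli_pmf (1/2 + \<mu> t)) (b t))"
      using b by (subst pmf_Pi) (auto simp: BB_def PiE_dflt_def)
    also have "\<dots> = (\<Prod>t<T. pi (hA d B * s (t mod d)) (b t))"
    proof (rule prod.cong[OF refl])
      fix t assume "t \<in> {..<T}"
      then have "\<mu> t = hA d B * s (t mod d)" using mu_eq by simp
      moreover have "0 \<le> 1/2 + \<mu> t" "1/2 + \<mu> t \<le> 1" using mub[of t] by auto
      ultimately show "pmf (bernoulli_pmf (1/2 + \<mu> t)) (b t) = pi (hA d B * s (t mod d)) (b t)"
        by (cases "b t") (auto simp: pi_def)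
    qed
    finally show ?thesis by (simp add: PPs_def[OF dpos dT Bpos dB bud])
  qed
  have regb: "regret d T p q r \<theta> (xsA d T) (\<xi>b b) = Rg s b" for b
  proof -
    have "prediction d p q r (xsA d T) (labels d \<theta> (xsA d T) (\<xi>b b)) t = ff d T p q r t b" if t: "t < T" for t
    proof -
      have "\<forall>u<t. labb b u = labels d \<theta> (xsA d T) (\<xi>b b) u"
        using t by (auto simp: labels_def \<xi>b_def labb_def \<mu>_def)
      then show ?thesis
        using prediction_prefix by (metis ff_def[OF dpos dT Bpos dB bud])
    qed
    moreover have "ip d \<theta> (xsA d T t) = hA d B * s (t mod d)" if "t < T" for t
      using mu_eq[of t] that by (simp add: \<mu>_def)
    ultimately show ?thesis unfolding regret_def Rg_def by (intro sum.cong) auto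
  qed
  have "(\<integral>\<^sup>+\<xi>. ennreal (regret d T p q r \<theta> (xsA d T) \<xi>) \<partial>measure_pmf (Pi_pmf {..<T} 0 (advN d \<theta> (xsA d T))))
      = (\<integral>\<^sup>+b. ennreal (Rg s b) \<partial>measure_pmf (Pi_pmf {..<T} False (\<lambda>t. bernoulli_pmf (1/2 + \<mu> t))))"
    by (simp add: Pi_eq regb)
  also have "\<dots> = (\<Sum>b\<in>BB T. ennreal (Rg s b) * pmf (Pi_pmf {..<T} False (\<lambda>t. bernoulli_pmf (1/2 + \<mu> t))) b)"
    using sub by (intro nn_integral_measure_pmf_support finite_BB) auto
  also have "\<dots> = (\<Sum>b\<in>BB T. ennreal (PPs d T B s b * Rg s b))"
  proof (rule sum.cong[OF refl])
    fix b assume b: "b \<in> BB T"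
    have "0 \<le> PPs d T B s b" by (rule PPs_nonneg[OF dpos dT Bpos dB bud s])
    moreover have "0 \<le> Rg s b" unfolding Rg_def by (intro sum_nonneg) auto
    ultimately show "ennreal (Rg s b) * pmf (Pi_pmf {..<T} False (\<lambda>t. bernoulli_pmf (1/2 + \<mu> t))) b
        = ennreal (PPs d T B s b * Rg s b)"
      by (simp add: pmfb[OF b] ennreal_mult mult.commute)
  qed
  also have "\<dots> = ennreal (\<Sum>b\<in>BB T. PPs d T B s b * Rg s b)"
  proof (rule sum_ennreal)
    fix b assume "b \<in> BB T"
    have "0 \<le> PPs d T B s b" by (rule PPs_nonneg[OF dpos dT Bpos dB bud s])
    moreover have "0 \<le> Rg s b" unfolding Rg_def by (intro sum_nonneg) auto
    ultimately show "0 \<le> PPs d T B s b * Rg s b" by simp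
  qed
  finally show ?thesis unfolding \<theta>_def .
qed

lemma pmf_s: "s \<in> SS d \<Longrightarrow> pmf (Pi_pmf {..<d} 0 (\<lambda>_. pmf_of_set {-1,0,1::real})) s = ww d"
proof -
  assume s: "s \<in> SS d"
  have c3: "card {-1,0,1::real} = 3" by simp
  have "pmf (Pi_pmf {..<d} 0 (\<lambda>_. pmf_of_set {-1,0,1::real})) s = (\<Prod>i<d. pmf (pmf_of_set {-1,0,1::real}) (s i))"
    using s by (subst pmf_Pi) (auto simp: SS_def PiE_dflt_def)
  also have "\<dots> = (\<Prod>i<d. 1/3)"
  proof (rule prod.cong[OF refl])
    fix i assume "i \<in> {..<d}"
    then have "s i \<in> {-1,0,1}" using s by (auto simp: SS_def PiE_dflt_def)
    then show "pmf (pmf_of_set {-1,0,1::real}) (s i) = 1/3" by (simp add: c3)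
  qed
  finally show ?thesis by (simp add: ww_def[OF dpos dT Bpos dB bud])
qed

lemma inner_total:
  "(\<integral>\<^sup>+\<omega>. ennreal (regret d T p q r (fst \<omega>) (fst (snd \<omega>)) (snd (snd \<omega>)))
      \<partial>measure_pmf (outcome T (advP d T B) (advN d)))
   = ennreal (\<Sum>s\<in>SS d. ww d * (\<Sum>b\<in>BB T. PPs d T B s b * Rg s b))"
proof -
  let ?M = "Pi_pmf {..<d} 0 (\<lambda>_. pmf_of_set {-1,0,1::real})"
  have nn: "0 \<le> (\<Sum>b\<in>BB T. PPs d T B s b * Rg s b)" if "s \<in> SS d" for s
  proof (intro sum_nonneg mult_nonneg_nonneg)
    fix b show "0 \<le> PPs d T B s b" by (rule PPs_nonneg[OF dpos dT Bpos dB bud that])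
    show "0 \<le> Rg s b" unfolding Rg_def by (intro sum_nonneg) auto
  qed
  have wn: "0 \<le> ww d" by (simp add: ww_def[OF dpos dT Bpos dB bud])
  have "(\<integral>\<^sup>+\<omega>. ennreal (regret d T p q r (fst \<omega>) (fst (snd \<omega>)) (snd (snd \<omega>)))
      \<partial>measure_pmf (outcome T (advP d T B) (advN d)))
      = (\<integral>\<^sup>+s. (\<integral>\<^sup>+\<xi>. ennreal (regret d T p q r (\<lambda>i. hA d B * s i) (xsA d T) \<xi>)
            \<partial>measure_pmf (Pi_pmf {..<T} 0 (advN d (\<lambda>i. hA d B * s i) (xsA d T)))) \<partial>measure_pmf ?M)"
    by (simp add: outcome_def advP_def)
  also have "\<dots> = (\<integral>\<^sup>+s. ennreal (\<Sum>b\<in>BB T. PPs d T B s b * Rg s b) \<partial>measure_pmf ?M)"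
    by (intro nn_integral_cong_AE) (auto simp: AE_measure_pmf_iff set_sPi inner_xi)
  also have "\<dots> = (\<Sum>s\<in>SS d. ennreal (\<Sum>b\<in>BB T. PPs d T B s b * Rg s b) * pmf ?M s)"
    by (intro nn_integral_measure_pmf_support finite_SS) (auto simp: set_sPi)
  also have "\<dots> = (\<Sum>s\<in>SS d. ennreal (ww d * (\<Sum>b\<in>BB T. PPs d T B s b * Rg s b)))"
    by (intro sum.cong refl) (simp add: pmf_s ennreal_mult nn wn mult.commute)
  also have "\<dots> = ennreal (\<Sum>s\<in>SS d. ww d * (\<Sum>b\<in>BB T. PPs d T B s b * Rg s b))"
    by (intro sum_ennreal mult_nonneg_nonneg wn nn)
  finally show ?thesis .
qed

lemma inner_bound:
  "(\<integral>\<^sup>+\<omega>. ennreal (regret d T p q r (fst \<omega>) (fst (snd \<omega>)) (snd (snd \<omega>)))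
      \<partial>measure_pmf (outcome T (advP d T B) (advN d)))
   \<ge> ennreal (1/288 * real d * real T / real B)"
proof -
  have "(hA d B)^2 * real T / 3 \<le> (\<Sum>s\<in>SS d. ww d * (\<Sum>b\<in>BB T. PPs d T B s b * Rg s b))"
    using main_real[OF dpos dT Bpos dB bud, of p r] unfolding Rg_def .
  moreover have "(hA d B)^2 * real T / 3 = 1/288 * real d * real T / real B"
    using hA2[OF dpos dT Bpos dB bud] Bpos by simp
  ultimately show ?thesis unfolding inner_total by (intro ennreal_leI) simp
qed

end

theorem mainTheorem4:
  shows "\<exists>c::real. c > 0 \<and>
    (\<forall>d T B :: nat. 0 < d \<and> 0 < T \<and> 0 < B \<and> d \<le> T \<and> d \<le> B \<longrightarrow>
      (\<exists>P N. valid_adversary d T P N \<and>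
        (\<forall>S p q. prob_space S \<and> seed_measurable S p q \<and> respects_budget d T B q \<longrightarrow>
           expected_regret d T P N S p q \<ge> ennreal (c * real d * real T / real B))))"
proof (intro exI[of _ "1/288"] conjI allI impI)
  show "(0::real) < 1/288" by simp
  fix d T B :: nat
  assume a: "0 < d \<and> 0 < T \<and> 0 < B \<and> d \<le> T \<and> d \<le> B"
  show "\<exists>P N. valid_adversary d T P N \<and>
        (\<forall>S p q. prob_space S \<and> seed_measurable S p q \<and> respects_budget d T B q \<longrightarrow>
           expected_regret d T P N S p q \<ge> ennreal (1/288 * real d * real T / real B))"
  proof (intro exI[of _ "advP d T B"] exI[of _ "advN d"] conjI allI impI)
    have e: "queried d (\<lambda>_ _ _ _. False) r xs y n = {}" for r xs y n
      by (induction n) auto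
    have "respects_budget d T B (\<lambda>_ _ _ _. False)"
      by (simp add: respects_budget_def e)
    then show "valid_adversary d T (advP d T B) (advN d)"
      using valid[of d T B "\<lambda>_ _ _ _. False"] a by blast
  next
    fix S p q assume b: "prob_space S \<and> seed_measurable S p q \<and> respects_budget d T B q"
    then interpret S: prob_space S by simp
    have bud: "respects_budget d T B q" using b by simp
    have "ennreal (1/288 * real d * real T / real B) = (\<integral>\<^sup>+r. ennreal (1/288 * real d * real T / real B) \<partial>S)"
      by (simp add: S.emeasure_space_1)
    also have "\<dots> \<le> expected_regret d T (advP d T B) (advN d) S p q"
      unfolding expected_regret_def
      by (intro nn_integral_mono inner_bound) (use a bud in auto)
    finally show "expected_regret d T (advP d T B) (advN d) S p q \<ge> ennreal (1/288 * real d * real T / real B)" .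
  qed
qed

end
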